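(* Define on $\mathbb{D}$ the harmonic mapping $f_D=h_D+\overline{g_D}$, where $$h_D(z)=\tfrac14\log\frac{1+z}{1-z}-\tfrac{i}{4}\log\frac{1+iz}{1-iz},\qquad g_D(z)=-\tfrac14\log\frac{1+z}{1-z}-\tfrac{i}{4}\log\frac{1+iz}{1-iz}.$$ Define also $f_C=h_C+\overline{g_C}$, where $$h_C(z)=\tfrac14\log\frac{1+z}{1-z}+\tfrac12\,\frac{z}{1-z^2},\qquad g_C(z)=\tfrac14\log\frac{1+z}{1-z}-\tfrac12\,\frac{z}{1-z^2}.$$ Both $f_D$ and $f_C$ have dilatation $\omega(z)=-z^2$. For every $t\in[0,1]$, the harmonic mapping $f_t=(1-t)f_D+tf_C$ is univalent on $\mathbb{D}$.
   Context: $\mathbb{D}=\{z\in\mathbb{C}:|z|<1\}$, and $\log$ denotes the principal branch. For $z\in\mathbb{D}$ the quantities $(1+z)/(1-z)$ and $(1+iz)/(1-iz)$ lie in the right half-plane. The dilatation of a harmonic mapping $h+\overline{g}$ is $g'/h'$. *)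

theory Defs
  imports "HOL-Analysis.Analysis"
begin

definition unit_disk :: "complex set" where
  "unit_disk = ball 0 1"

definition dilatation :: "(complex \<Rightarrow> complex) \<Rightarrow> (complex \<Rightarrow> complex) \<Rightarrow> complex \<Rightarrow> complex" where
  "dilatation h g z = deriv g z / deriv h z"

definition hD :: "complex \<Rightarrow> complex" where
  "hD z = (1/4) * Ln ((1 + z) / (1 - z)) - (\<i>/4) * Ln ((1 + \<i>*z) / (1 - \<i>*z))"

definition gD :: "complex \<Rightarrow> complex" where
  "gD z = -(1/4) * Ln ((1 + z) / (1 - z)) - (\<i>/4) * Ln ((1 + \<i>*z) / (1 - \<i>*z))"

definition hC :: "complex \<Rightarrow> complex" where
  "hC z = (1/4) * Ln ((1 + z) / (1 - z)) + (1/2) * (z / (1 - z^2))"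

definition gC :: "complex \<Rightarrow> complex" where
  "gC z = (1/4) * Ln ((1 + z) / (1 - z)) - (1/2) * (z / (1 - z^2))"

definition fD :: "complex \<Rightarrow> complex" where
  "fD z = hD z + cnj (gD z)"

definition fC :: "complex \<Rightarrow> complex" where
  "fC z = hC z + cnj (gC z)"

definition f_mix :: "real \<Rightarrow> complex \<Rightarrow> complex" where
  "f_mix t z = complex_of_real (1 - t) * fD z + complex_of_real t * fC z"

end

theory Submission
  imports Defs
begin


lemma alg_neg:
  fixes t sx ch sy cy :: real
  assumes t: "0<t" "t<1" and sx: "sx>0" and sy: "sy>0" and cy: "cy>0"
    and ch: "ch^2 = 1 + sx^2" "ch > 0" and trig: "sy^2+cy^2 = 1"
  defines "KK \<equiv> (1-t) + t * ch * cy"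
  defines "xd \<equiv> -KK/(t * sy * sx)"
  shows "(1-t) * (ch * xd * cy + sx * sy)/(cy^2 + sx^2) + t * xd < 0"
proof -
  define Q where "Q = cy^2 + sx^2"
  have Q: "Q > 0" using cy by (simp add: Q_def add_pos_nonneg)
  define a where "a = ch * cy"
  define b where "b = sx * sy"
  have Qe: "Q = a^2 + b^2"
  proof -
    have "a^2 + b^2 = (1+sx^2) * cy^2 + sx^2 * sy^2" by (simp add: a_def b_def power_mult_distrib ch)
    also have "\<dots> = cy^2 + sx^2 * (sy^2+cy^2)" by algebra
    finally show ?thesis using trig by (simp add: Q_def)
  qed
  have a: "a > 0" using ch cy a_def by simp
  have b: "b > 0" using sx sy b_def by simp
  define P where "P = (1-t) * (ch * xd * cy + sx * sy)/(cy^2 + sx^2) + t * xd"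
  have PQ: "P * Q = (1-t) * (a * xd + b) + t * xd * Q"
    using Q unfolding P_def Q_def[symmetric] by (simp add: a_def b_def field_simps)
  have KKa: "KK = (1-t) + t * a" by (simp add: KK_def a_def mult.assoc)
  have xdtb: "xd * (t * b) = -KK" using t sx sy by (simp add: xd_def b_def)
  have "P * Q * (t * b) = (1-t) * (a * (xd * (t * b)) + t * b^2) + t * (xd * (t * b)) * Q"
    unfolding PQ by (simp add: algebra_simps power2_eq_square)
  also have "\<dots> = -((1-t)^2 * a + 2 * (1-t) * t * a^2 + t^2 * a * Q)"
    unfolding xdtb KKa Qe by (simp add: algebra_simps power2_eq_square)
  also have "\<dots> < 0"
  proof -
    have "(1-t)^2 * a \<ge> 0" using a by simp
    moreover have "2 * (1-t) * t * a^2 \<ge> 0" using a t by simp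
    moreover have "t^2 * a * Q > 0" using a t Q by simp
    ultimately show ?thesis by linarith
  qed
  finally have "P * (Q * (t * b)) < 0" by (simp add: mult.assoc)
  moreover have "Q * (t * b) > 0" using Q t b by simp
  ultimately have "P < 0" by (metis mult_pos_pos not_less_iff_gr_or_eq mult_zero_left order_less_asym)
  then show ?thesis unfolding P_def .
qed

definition AA :: "real \<Rightarrow> real \<Rightarrow> real \<Rightarrow> real" where
  "AA t X Y = (1-t) * arctan (sinh X / cos Y) + t * X"
definition BB :: "real \<Rightarrow> real \<Rightarrow> real \<Rightarrow> real" where
  "BB t X Y = (1-t) * Y + t * cosh X * sin Y"

lemma core:
  assumes t: "0<t" "t<1" and X: "0<X1" "X1<X2" and Y: "0<Y2" "Y2<Y1" "Y1<pi/2"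
    and eq: "BB t X1 Y1 = BB t X2 Y2"
  shows "AA t X1 Y1 < AA t X2 Y2"
proof -
  define c where "c = BB t X1 Y1"
  define R where "R = (\<lambda>Y. (c - (1-t) * Y) / (t * sin Y))"
  define phi where "phi = (\<lambda>Y. AA t (arcosh (R Y)) Y)"
  have RY1: "R Y1 = cosh X1"
  proof -
    have "sin Y1 > 0" using Y by (intro sin_gt_zero) auto
    then show ?thesis using t by (simp add: R_def c_def BB_def field_simps)
  qed
  have RY2: "R Y2 = cosh X2"
  proof -
    have "sin Y2 > 0" using Y by (intro sin_gt_zero) auto
    then show ?thesis using t eq by (simp add: R_def c_def BB_def field_simps)
  qed
  have ch1: "cosh X1 > 1" using X cosh_real_nonneg_less_iff[of 0 X1] by simp
  have Rgt: "R Y > 1" if "Y2 \<le> Y" "Y \<le> Y1" for Y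
  proof -
    have sY: "sin Y > 0" using Y that by (intro sin_gt_zero) auto
    have sY1: "sin Y \<le> sin Y1" using Y that by (intro sin_monotone_2pi_le) auto
    have n1: "c - (1-t) * Y1 = t * cosh X1 * sin Y1" by (simp add: c_def BB_def)
    have n1p: "c - (1-t) * Y1 > 0" unfolding n1 using t \<open>sin Y > 0\<close> sY1 by simp
    have mm: "(1-t) * Y \<le> (1-t) * Y1" using that t by (simp add: mult_left_mono)
    have "R Y1 \<le> R Y" unfolding R_def
    proof (rule frac_le)
      show "0 \<le> c - (1 - t) * Y" using n1p mm by linarith
      show "c - (1 - t) * Y1 \<le> c - (1 - t) * Y" using mm by linarith
      show "0 < t * sin Y" using t sY by simp
      show "t * sin Y \<le> t * sin Y1" using t sY1 by simp
    qed
    then show ?thesis using RY1 ch1 by simp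
  qed
  have deriv: "\<exists>D. (phi has_real_derivative D) (at Y) \<and> D < 0" if "Y2 \<le> Y" "Y \<le> Y1" for Y
  proof -
    have sy: "sin Y > 0" using Y that by (intro sin_gt_zero) auto
    have cy: "cos Y > 0" using Y that by (intro cos_gt_zero) auto
    have R1: "R Y > 1" using Rgt that .
    define x where "x = arcosh (R Y)"
    have chx: "cosh x = R Y" using R1 by (simp add: x_def)
    have sxp: "sinh x = sqrt ((R Y)^2 - 1)" using R1 by (simp add: x_def sinh_arcosh_real)
    have sxpos: "sinh x > 0" using R1 unfolding sxp by simp
    define Rd where "Rd = ((-(1-t)) * (t * sin Y) - (c - (1-t) * Y) * (t * cos Y)) / (t * sin Y)^2"
    have dR: "(R has_real_derivative Rd) (at Y)"
      unfolding R_def Rd_def using sy t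
      by (auto intro!: derivative_eq_intros simp: power2_eq_square)
    have dx: "((\<lambda>Y. arcosh (R Y)) has_real_derivative (1 / sqrt ((R Y)^2 - 1)) * Rd) (at Y)"
      by (rule DERIV_chain2[OF arcosh_real_has_field_derivative[OF R1] dR])
    define xd where "xd = Rd / sinh x"
    have dx': "((\<lambda>Y. arcosh (R Y)) has_real_derivative xd) (at Y)"
      using dx unfolding xd_def sxp by simp
    define E where "E = (1-t) * (cosh x * xd * cos Y + sinh x * sin Y)/((cos Y)^2 + (sinh x)^2) + t * xd"
    have dsx: "((\<lambda>Y. sinh (arcosh (R Y))) has_real_derivative cosh x * xd) (at Y)"
      by (rule derivative_eq_intros dx' | simp add: x_def)+
    define W where "W = (cosh x * xd * cos Y + sinh x * sin Y)/(cos Y)^2"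
    have dw: "((\<lambda>Y. sinh (arcosh (R Y)) / cos Y) has_real_derivative W) (at Y)"
      unfolding W_def
      by (rule derivative_eq_intros dsx refl | use cy in \<open>simp add: x_def power2_eq_square\<close>)+
    have da: "((\<lambda>Y. arctan (sinh (arcosh (R Y)) / cos Y)) has_real_derivative W / (1 + (sinh x / cos Y)^2)) (at Y)"
      using DERIV_chain2[OF DERIV_arctan dw] by (simp add: x_def divide_inverse mult.commute)
    have dphi0: "(phi has_real_derivative (1-t) * (W / (1 + (sinh x / cos Y)^2)) + t * xd) (at Y)"
      unfolding phi_def AA_def
      using DERIV_add[OF DERIV_cmult[OF da, of "1-t"] DERIV_cmult[OF dx', of t]] by simp
    have "(1-t) * (W / (1 + (sinh x / cos Y)^2)) + t * xd = E"
    proof -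
      have qp: "(cos Y)^2 + (sinh x)^2 > 0" using cy by (simp add: add_pos_nonneg)
      have "1 + (sinh x / cos Y)^2 = ((cos Y)^2 + (sinh x)^2) / (cos Y)^2"
        using cy by (simp add: field_simps)
      then have "W / (1 + (sinh x / cos Y)^2) = (cosh x * xd * cos Y + sinh x * sin Y)/((cos Y)^2 + (sinh x)^2)"
        unfolding W_def using cy qp by (simp only: divide_divide_times_eq) (simp add: power2_eq_square)
      then show ?thesis unfolding E_def by simp
    qed
    then have dphi: "(phi has_real_derivative E) (at Y)" using dphi0 by simp
    have num: "c - (1-t) * Y = t * cosh x * sin Y"
      using chx sy t unfolding R_def by (simp add: field_simps)
    have xdf: "xd = - ((1-t) + t * cosh x * cos Y) / (t * sin Y * sinh x)"
      unfolding xd_def Rd_def num using sy t sxpos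
      by (simp add: field_simps power2_eq_square)
    have "E < 0" unfolding E_def xdf
      by (rule alg_neg) (use t sxpos sy cy in \<open>auto simp: cosh_square_eq sin_cos_squared_add\<close>)
    then show ?thesis using dphi by blast
  qed
  have "phi Y1 < phi Y2"
    by (rule DERIV_neg_imp_decreasing[OF \<open>Y2 < Y1\<close> deriv])
  moreover have "phi Y1 = AA t X1 Y1" using X unfolding phi_def RY1 by (subst arcosh_cosh_real) auto
  moreover have "phi Y2 = AA t X2 Y2" using X unfolding phi_def RY2 by (subst arcosh_cosh_real) auto
  ultimately show ?thesis by simp
qed



lemma AA_mono:
  assumes t: "0 \<le> t" "t \<le> 1" and Y: "\<bar>Y\<bar> < pi/2" and X: "X < X'"
  shows "AA t X Y < AA t X' Y"
proof -
  have cy: "cos Y > 0" using Y by (intro cos_gt_zero_pi) auto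
  have "sinh X < sinh X'" using X sinh_real_strict_mono by (simp add: strict_mono_less)
  then have "sinh X / cos Y < sinh X' / cos Y" using cy by (simp add: divide_strict_right_mono)
  then have a: "arctan (sinh X / cos Y) < arctan (sinh X' / cos Y)" by (simp add: arctan_less_iff)
  show ?thesis
  proof (cases "t = 1")
    case True then show ?thesis using X by (simp add: AA_def)
  next
    case False
    then have "(1-t) * arctan (sinh X / cos Y) < (1-t) * arctan (sinh X' / cos Y)" using t a by simp
    moreover have "t * X \<le> t * X'" using t X by (simp add: mult_left_mono)
    ultimately show ?thesis by (simp add: AA_def)
  qed
qed

lemma BB_mono:
  assumes t: "0 \<le> t" "t \<le> 1" and Y: "\<bar>Y\<bar> < pi/2" "\<bar>Y'\<bar> < pi/2" and lt: "Y < Y'"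
  shows "BB t X Y < BB t X Y'"
proof -
  have s: "sin Y < sin Y'" using Y lt by (intro sin_monotone_2pi) auto
  show ?thesis
  proof (cases "t = 0")
    case True then show ?thesis using lt by (simp add: BB_def)
  next
    case False
    then have "t * cosh X * sin Y < t * cosh X * sin Y'" using t s by simp
    moreover have "(1-t) * Y \<le> (1-t) * Y'" using t lt by (simp add: mult_left_mono)
    ultimately show ?thesis by (simp add: BB_def)
  qed
qed

lemma BB_monoX:
  assumes t: "0 < t" and Y: "0 < Y" "Y < pi/2" and X: "0 \<le> X" "X < X'"
  shows "BB t X Y < BB t X' Y"
proof -
  have "sin Y > 0" using Y by (intro sin_gt_zero) auto
  moreover have "cosh X < cosh X'" using X cosh_real_nonneg_less_iff[of X X'] by simp
  ultimately show ?thesis using t by (simp add: BB_def)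
qed

lemma AA_0: "AA t 0 Y = 0" by (simp add: AA_def)
lemma BB_0: "BB t X 0 = 0" by (simp add: BB_def)
lemma AA_negX: "AA t (-X) Y = - AA t X Y" by (simp add: AA_def arctan_minus algebra_simps)
lemma AA_negY: "AA t X (-Y) = AA t X Y" by (simp add: AA_def)
lemma BB_negX: "BB t (-X) Y = BB t X Y" by (simp add: BB_def)
lemma BB_negY: "BB t X (-Y) = - BB t X Y" by (simp add: BB_def algebra_simps)

lemma inj_pos:
  assumes t: "0<t" "t<1" and X: "0<X1" "0<X2" and Y: "0<Y1" "Y1<pi/2" "0<Y2" "Y2<pi/2"
    and eqA: "AA t X1 Y1 = AA t X2 Y2" and eqB: "BB t X1 Y1 = BB t X2 Y2"
  shows "X1 = X2"
proof -
  have key: False if "0<X1" "X1<X2" "0<Y1" "Y1<pi/2" "0<Y2" "Y2<pi/2"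
      "AA t X1 Y1 = AA t X2 Y2" "BB t X1 Y1 = BB t X2 Y2" for X1 X2 Y1 Y2
  proof -
    have "Y2 < Y1"
    proof (rule ccontr)
      assume "\<not> Y2 < Y1"
      then have "BB t X1 Y1 \<le> BB t X1 Y2"
        using that t BB_mono[of t Y1 Y2 X1] by (cases "Y1 = Y2") auto
      also have "\<dots> < BB t X2 Y2" using that t by (intro BB_monoX) auto
      finally show False using that by simp
    qed
    then have "AA t X1 Y1 < AA t X2 Y2" using that t by (intro core) auto
    then show False using that by simp
  qed
  show ?thesis
  proof (rule linorder_cases[of X1 X2])
    assume "X1 < X2" then show ?thesis using key[of X1 X2 Y1 Y2] assms by auto
  next
    assume "X2 < X1" then show ?thesis using key[of X2 X1 Y2 Y1] assms by auto
  qed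
qed

lemma AA_sign: assumes "0 \<le> t" "t \<le> 1" "\<bar>Y\<bar> < pi/2"
  shows "AA t X Y > 0 \<longleftrightarrow> X > 0" "AA t X Y < 0 \<longleftrightarrow> X < 0"
  using AA_mono[OF assms, of 0 X] AA_mono[OF assms, of X 0] AA_0[of t Y]
  by (cases X "0::real" rule: linorder_cases; auto)+

lemma BB_sign: assumes "0 \<le> t" "t \<le> 1" "\<bar>Y\<bar> < pi/2"
  shows "BB t X Y > 0 \<longleftrightarrow> Y > 0" "BB t X Y < 0 \<longleftrightarrow> Y < 0"
  using BB_mono[OF assms(1,2) _ assms(3), of 0 X] BB_mono[OF assms(1,2) assms(3), of 0 X] BB_0[of t X]
  by (cases Y "0::real" rule: linorder_cases; auto)+

lemma injAB:
  assumes t: "0 \<le> t" "t \<le> 1" and Y: "\<bar>Y1\<bar> < pi/2" "\<bar>Y2\<bar> < pi/2"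
    and eqA: "AA t X1 Y1 = AA t X2 Y2" and eqB: "BB t X1 Y1 = BB t X2 Y2"
  shows "X1 = X2 \<and> Y1 = Y2"
proof -
  have Yeq: "Y1 = Y2" if "X1 = X2"
    using BB_mono[OF t Y(1) Y(2), of X1] BB_mono[OF t Y(2) Y(1), of X1] eqB that
    by (cases Y1 Y2 rule: linorder_cases) auto
  have Xeq: "X1 = X2" if "Y1 = Y2"
    using AA_mono[OF t Y(1), of X1 X2] AA_mono[OF t Y(1), of X2 X1] eqA that
    by (cases X1 X2 rule: linorder_cases) auto
  have "X1 = X2"
  proof (cases "t = 0 \<or> t = 1")
    case True
    then show ?thesis
    proof
      assume "t = 0" then have "Y1 = Y2" using eqB by (simp add: BB_def)
      then show ?thesis by (rule Xeq)
    next
      assume "t = 1" then show ?thesis using eqA by (simp add: AA_def)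
    qed
  next
    case False
    then have t': "0 < t" "t < 1" using t by auto
    have sX: "X1 > 0 \<longleftrightarrow> X2 > 0" "X1 < 0 \<longleftrightarrow> X2 < 0"
      using AA_sign[OF t Y(1), of X1] AA_sign[OF t Y(2), of X2] eqA by auto
    have sY: "Y1 > 0 \<longleftrightarrow> Y2 > 0" "Y1 < 0 \<longleftrightarrow> Y2 < 0"
      using BB_sign[OF t Y(1), of X1] BB_sign[OF t Y(2), of X2] eqB by auto
    show ?thesis
    proof (cases "X1 = 0 \<or> Y1 = 0")
      case True
      then show ?thesis
      proof
        assume "X1 = 0" then show ?thesis using sX by (cases X2 "0::real" rule: linorder_cases) auto
      next
        assume "Y1 = 0" then have "Y2 = 0" using sY by (cases Y2 "0::real" rule: linorder_cases) auto
        then show ?thesis using Xeq \<open>Y1 = 0\<close> by simp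
      qed
    next
      case False
      have ip: "\<bar>X1\<bar> = \<bar>X2\<bar>"
      proof (rule inj_pos[OF t'])
        show "0 < \<bar>X1\<bar>" "0 < \<bar>Y1\<bar>" "\<bar>Y1\<bar> < pi/2" "\<bar>Y2\<bar> < pi/2" using False Y by auto
        show "0 < \<bar>X2\<bar>" using False sX by auto
        show "0 < \<bar>Y2\<bar>" using False sY by auto
        show "AA t \<bar>X1\<bar> \<bar>Y1\<bar> = AA t \<bar>X2\<bar> \<bar>Y2\<bar>"
          using eqA sX sY False
          by (cases "X1 > 0"; cases "Y1 > 0") (auto simp: abs_if AA_negX AA_negY)
        show "BB t \<bar>X1\<bar> \<bar>Y1\<bar> = BB t \<bar>X2\<bar> \<bar>Y2\<bar>"
          using eqB sX sY False
          by (cases "X1 > 0"; cases "Y1 > 0") (auto simp: abs_if BB_negX BB_negY)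
      qed
      then show ?thesis using sX False by (auto simp: abs_if split: if_splits)
    qed
  qed
  then show ?thesis using Yeq by simp
qed



lemma disk_re_pos:
  assumes "norm (z::complex) < 1"
  shows "Re ((1+z)/(1-z)) > 0"
proof -
  have nz: "1 - z \<noteq> 0" using assms by auto
  have "(Re z)^2 + (Im z)^2 < 1" using assms
    by (metis cmod_power2 norm_ge_zero power_less_one_iff zero_less_numeral abs_of_nonneg)
  then have num: "(1 + Re z) * (1 - Re z) + Im z * (- Im z) > 0" by (simp add: algebra_simps power2_eq_square)
  have den: "(Re (1-z))^2 + (Im (1-z))^2 > 0" using nz
    by (metis complex_eq_iff sum_power2_gt_zero_iff zero_complex.simps)
  show ?thesis unfolding Re_divide using num den by simp
qed

lemma Im_sinh: "Im (sinh u) = cosh (Re u) * sin (Im u)"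
  by (simp add: sinh_field_def cosh_field_def Im_exp algebra_simps add_divide_distrib)

lemma rep:
  assumes z: "z \<in> unit_disk"
  defines "u \<equiv> Ln ((1+z)/(1-z))"
  shows "f_mix t z = Complex (AA t (Re u) (Im u) / 2) (BB t (Re u) (Im u) / 2)"
proof -
  define w where "w = (1+z)/(1-z)"
  have nz: "norm z < 1" using z by (simp add: unit_disk_def)
  have z1: "1 - z \<noteq> 0" using nz by auto
  have rw: "Re w > 0" unfolding w_def by (rule disk_re_pos[OF nz])
  have w0: "w \<noteq> 0" using rw by auto
  have w1: "w + 1 \<noteq> 0" using rw by (metis add_pos_pos plus_complex.simps(1) one_complex.simps(1) zero_less_one zero_complex.simps(1) less_irrefl)
  have wi: "w + \<i> \<noteq> 0" using rw by (metis Re_complex_of_real complex_Re_le_cmod plus_complex.sel(1) complex_i_not_zero less_irrefl zero_complex.sel(1) imaginary_unit.sel(1) add_0_right)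
  have ew: "exp u = w" unfolding u_def w_def[symmetric] using w0 by simp
  have zw: "z = (w - 1)/(w + 1)" using z1 w1 unfolding w_def by (simp add: field_simps)
  define v where "v = (1 + \<i>*z)/(1 - \<i>*z)"
  have nz': "norm (\<i>*z) < 1" using nz by (simp add: norm_mult)
  have rv: "Re v > 0" unfolding v_def by (rule disk_re_pos[OF nz'])
  have v0: "v \<noteq> 0" using rv by auto
  have vw: "v = (1 + \<i>*w)/(w + \<i>)"
  proof -
    have a: "1 - \<i>*z \<noteq> 0" using nz' by auto
    have zw': "z * (w + 1) = w - 1" using zw w1 by (simp add: field_simps)
    have "(1+\<i>*z)*(w+\<i>) - (1+\<i>*w)*(1-\<i>*z) = (1-\<i>)*((w-1) - z*(w+1))"
      by (simp add: algebra_simps)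
    then have "(1+\<i>*z)*(w+\<i>) = (1+\<i>*w)*(1-\<i>*z)" using zw' by simp
    then show ?thesis unfolding v_def using a wi by (simp add: frac_eq_eq)
  qed
  define X where "X = Re u"
  define Y where "Y = Im u"
  have Rew: "Re w = exp X * cos Y" and Imw: "Im w = exp X * sin Y"
    using ew by (auto simp: X_def Y_def Re_exp Im_exp)
  have cY: "cos Y > 0" using rw Rew by (simp add: zero_less_mult_iff)
  have ratio: "Im v / Re v = sinh X / cos Y"
  proof -
    have d: "(Re (w + \<i>))^2 + (Im (w + \<i>))^2 > 0" using wi
      by (metis complex_eq_iff sum_power2_gt_zero_iff zero_complex.simps)
    have "Im v / Re v = ((Re w)^2 + (Im w)^2 - 1) / (2 * Re w)"
    proof -
      have "Im v / Re v = (Im (1 + \<i>*w) * Re (w + \<i>) - Re (1 + \<i>*w) * Im (w + \<i>)) /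
                         (Re (1 + \<i>*w) * Re (w + \<i>) + Im (1 + \<i>*w) * Im (w + \<i>))"
        unfolding vw Re_divide Im_divide using d by simp
      also have "\<dots> = (Re w * Re w - (1 - Im w) * (Im w + 1)) / ((1 - Im w) * Re w + Re w * (Im w + 1))"
        by simp
      also have "\<dots> = ((Re w)^2 + (Im w)^2 - 1) / (2 * Re w)"
        by (simp add: algebra_simps power2_eq_square)
      finally show ?thesis .
    qed
    also have "\<dots> = (exp X ^ 2 - 1) / (2 * exp X * cos Y)"
    proof -
      have "(Re w)^2 + (Im w)^2 = exp X ^ 2"
        unfolding Rew Imw power_mult_distrib distrib_left[symmetric] sin_cos_squared_add2 by simp
      then show ?thesis unfolding Rew by (simp add: mult.assoc)
    qed
    also have "\<dots> = sinh X / cos Y"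
      using cY by (simp add: sinh_field_def exp_minus field_simps power2_eq_square)
    finally show ?thesis .
  qed
  have ImL2: "Im (Ln v) = arctan (sinh X / cos Y)"
    using arg_conv_arctan[OF rv] Arg_eq_Im_Ln[OF v0] ratio by simp
  have sw: "z / (1 - z^2) = sinh u / 2"
  proof -
    have sh: "sinh u = (w - 1/w) / 2" unfolding sinh_field_def exp_minus ew by (simp add: inverse_eq_divide)
    have z2: "z^2 = (w-1)^2/(w+1)^2" unfolding zw by (rule power_divide)
    have "1 - z^2 = ((w+1)^2 - (w-1)^2) / (w+1)^2" unfolding z2 using w1
      by (simp add: diff_divide_distrib)
    also have "(w+1)^2 - (w-1)^2 = 4 * w" by (simp add: power2_eq_square algebra_simps)
    finally have e1: "1 - z^2 = 4 * w / (w+1)^2" .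
    have "z / (1 - z^2) = ((w - 1)/(w + 1)) * ((w+1)^2 / (4 * w))" unfolding e1 zw[symmetric] by simp
    also have "\<dots> = (w - 1) * (w + 1) / (4 * w)" using w1 by (simp add: power2_eq_square)
    also have "\<dots> = (w - 1/w) / 4" using w0 by (simp add: field_simps power2_eq_square)
    finally show ?thesis unfolding sh by simp
  qed
  have fD: "fD z = Complex (Im (Ln v) / 2) (Y / 2)"
    unfolding fD_def hD_def gD_def v_def[symmetric] w_def[symmetric] u_def[symmetric]
    by (simp add: complex_eq_iff Y_def u_def w_def)
  have fC: "fC z = Complex (X / 2) (cosh X * sin Y / 2)"
    unfolding fC_def hC_def gC_def w_def[symmetric] u_def[symmetric] sw
    by (simp add: complex_eq_iff X_def Y_def Im_sinh u_def w_def)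
  show ?thesis
    unfolding f_mix_def fD fC ImL2 AA_def BB_def X_def[symmetric] Y_def[symmetric]
    by (simp add: complex_eq_iff algebra_simps)
qed



lemma sq_ne:
  assumes "norm (z::complex) < 1"
  shows "1 - z^2 \<noteq> 0" "1 + z^2 \<noteq> 0" "z^2 \<noteq> 1" "z^2 \<noteq> -1"
proof -
  have "norm z * norm z \<le> norm z" using assms by (intro mult_left_le) auto
  then have n: "norm (z^2) < 1" using assms by (simp add: norm_power power2_eq_square norm_mult)
  show "z^2 \<noteq> 1" using n by auto
  show "z^2 \<noteq> -1" using n by auto
  then show "1 + z^2 \<noteq> 0" by (metis add.commute add_eq_0_iff)
  show "1 - z^2 \<noteq> 0" using \<open>z^2 \<noteq> 1\<close> by simp
qed

lemma dL:
  assumes "norm (z::complex) < 1"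
  shows "((\<lambda>z. Ln ((1+z)/(1-z))) has_field_derivative 2/(1-z^2)) (at z)"
proof -
  have z1: "1 - z \<noteq> 0" and z1': "1 + z \<noteq> 0" using assms by (auto simp: add_eq_0_iff)
  have rw: "Re ((1+z)/(1-z)) > 0" by (rule disk_re_pos[OF assms])
  have np: "(1+z)/(1-z) \<notin> \<real>\<^sub>\<le>\<^sub>0" using rw by (auto simp: complex_nonpos_Reals_iff)
  have dq: "((\<lambda>z. (1+z)/(1-z)) has_field_derivative ((1-z) + (1+z))/(1-z)^2) (at z)"
    using z1 by (auto intro!: derivative_eq_intros simp: power2_eq_square)
  have "((\<lambda>z. Ln ((1+z)/(1-z))) has_field_derivative inverse ((1+z)/(1-z)) * (((1-z) + (1+z))/(1-z)^2)) (at z)"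
    by (rule DERIV_chain2[OF has_field_derivative_Ln[OF np] dq])
  moreover have "inverse ((1+z)/(1-z)) * (((1-z) + (1+z))/(1-z)^2) = 2/(1-z^2)"
  proof -
    have g: "(b/a) * (2/b^2) = 2/(a*b)" if "a \<noteq> 0" "b \<noteq> 0" for a b :: complex
      using that by (simp add: field_simps power2_eq_square)
    have "inverse ((1+z)/(1-z)) * (((1-z) + (1+z))/(1-z)^2) = ((1-z)/(1+z)) * (2/(1-z)^2)"
      by simp
    also have "\<dots> = 2/((1+z)*(1-z))" by (rule g[OF z1' z1])
    also have "(1+z)*(1-z) = 1 - z^2" by (simp add: algebra_simps power2_eq_square)
    finally show ?thesis .
  qed
  ultimately show ?thesis by simp
qed

lemma dLi:
  assumes "norm (z::complex) < 1"
  shows "((\<lambda>z. Ln ((1+\<i>*z)/(1-\<i>*z))) has_field_derivative 2*\<i>/(1+z^2)) (at z)"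
proof -
  have n: "norm (\<i>*z) < 1" using assms by (simp add: norm_mult)
  have e: "2/(1-(\<i>*z)^2) * \<i> = 2*\<i>/(1+z^2)" by (simp add: power_mult_distrib)
  have di: "((\<lambda>z. \<i>*z) has_field_derivative \<i>) (at z)" by (auto intro!: derivative_eq_intros)
  have "((\<lambda>x. Ln ((1+\<i>*x)/(1-\<i>*x))) has_field_derivative 2/(1-(\<i>*z)^2) * \<i>) (at z)"
    using DERIV_chain2[where f="\<lambda>z. Ln ((1+z)/(1-z))" and g="\<lambda>z. \<i>*z", OF dL[OF n] di] by simp
  then show ?thesis unfolding e .
qed

lemma dR:
  assumes "norm (z::complex) < 1"
  shows "((\<lambda>z. z/(1-z^2)) has_field_derivative (1+z^2)/(1-z^2)^2) (at z)"
proof -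
  have a: "1 - z^2 \<noteq> 0" using sq_ne[OF assms] by simp
  have "((\<lambda>z. z/(1-z^2)) has_field_derivative (1 * (1-z^2) - z * (- (2 * z))) / (1-z^2)^2) (at z)"
    using a by (auto intro!: derivative_eq_intros simp: power2_eq_square)
  moreover have "(1 * (1-z^2) - z * (- (2 * z))) = 1 + z^2" by (simp add: power2_eq_square)
  ultimately show ?thesis by metis
qed

lemma algD1: assumes a: "1 - q \<noteq> (0::complex)" and b: "1 + q \<noteq> 0"
  shows "(1/4)*(2/(1-q)) - (\<i>/4)*(2*\<i>/(1+q)) = 1/((1-q)*(1+q))"
proof -
  have "(1/4)*(2/(1-q)) - (\<i>/4)*(2*\<i>/(1+q)) = (1/2)/(1-q) + (1/2)/(1+q)" by simp
  also have "\<dots> = ((1/2)*(1+q) + (1/2)*(1-q))/((1-q)*(1+q))" by (rule add_frac_eq[OF a b])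
  also have "(1/2)*(1+q) + (1/2)*(1-q) = 1" by (simp add: field_simps)
  finally show ?thesis .
qed
lemma algD2: assumes a: "1 - q \<noteq> (0::complex)" and b: "1 + q \<noteq> 0"
  shows "-(1/4)*(2/(1-q)) - (\<i>/4)*(2*\<i>/(1+q)) = -q/((1-q)*(1+q))"
proof -
  have "-(1/4)*(2/(1-q)) - (\<i>/4)*(2*\<i>/(1+q)) = (-1/2)/(1-q) + (1/2)/(1+q)" by simp
  also have "\<dots> = ((-1/2)*(1+q) + (1/2)*(1-q))/((1-q)*(1+q))" by (rule add_frac_eq[OF a b])
  also have "(-1/2)*(1+q) + (1/2)*(1-q) = -q" by (simp add: field_simps)
  finally show ?thesis .
qed
lemma algC1: assumes a: "1 - q \<noteq> (0::complex)"
  shows "(1/4)*(2/(1-q)) + (1/2)*((1+q)/(1-q)^2) = 1/(1-q)^2"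
proof -
  have "(1/4)*(2/(1-q)) + (1/2)*((1+q)/(1-q)^2) = ((1/2)*(1-q))/(1-q)^2 + ((1/2)*(1+q))/(1-q)^2"
    using a by (simp add: power2_eq_square)
  also have "\<dots> = ((1/2)*(1-q) + (1/2)*(1+q))/(1-q)^2" by (simp add: add_divide_distrib)
  also have "(1/2)*(1-q) + (1/2)*(1+q) = 1" by (simp add: field_simps)
  finally show ?thesis .
qed
lemma algC2: assumes a: "1 - q \<noteq> (0::complex)"
  shows "(1/4)*(2/(1-q)) - (1/2)*((1+q)/(1-q)^2) = -q/(1-q)^2"
proof -
  have "(1/4)*(2/(1-q)) - (1/2)*((1+q)/(1-q)^2) = ((1/2)*(1-q))/(1-q)^2 - ((1/2)*(1+q))/(1-q)^2"
    using a by (simp add: power2_eq_square)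
  also have "\<dots> = ((1/2)*(1-q) - (1/2)*(1+q))/(1-q)^2" by (simp add: diff_divide_distrib)
  also have "(1/2)*(1-q) - (1/2)*(1+q) = -q" by (simp add: field_simps)
  finally show ?thesis .
qed
lemma ratio_alg: assumes "d \<noteq> (0::complex)" shows "(-q/d)/(1/d) = -q" using assms by simp

lemma dil_D:
  assumes "z \<in> unit_disk"
  shows "dilatation hD gD z = - (z^2)"
proof -
  have n: "norm z < 1" using assms by (simp add: unit_disk_def)
  note ne = sq_ne[OF n]
  have hD: "hD = (\<lambda>z. (1/4) * Ln ((1 + z) / (1 - z)) - (\<i>/4) * Ln ((1 + \<i>*z) / (1 - \<i>*z)))"
    by (rule ext) (simp add: hD_def)
  have gD: "gD = (\<lambda>z. -(1/4) * Ln ((1 + z) / (1 - z)) - (\<i>/4) * Ln ((1 + \<i>*z) / (1 - \<i>*z)))"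
    by (rule ext) (simp add: gD_def)
  have dh: "(hD has_field_derivative (1/4) * (2/(1-z^2)) - (\<i>/4) * (2*\<i>/(1+z^2))) (at z)"
    unfolding hD by (intro DERIV_diff DERIV_cmult dL[OF n] dLi[OF n])
  have dg: "(gD has_field_derivative -(1/4) * (2/(1-z^2)) - (\<i>/4) * (2*\<i>/(1+z^2))) (at z)"
    unfolding gD by (intro DERIV_diff DERIV_cmult dL[OF n] dLi[OF n])
  have d: "(1 - z^2) * (1 + z^2) \<noteq> 0" using ne by simp
  show ?thesis
    unfolding dilatation_def DERIV_imp_deriv[OF dh] DERIV_imp_deriv[OF dg]
      algD1[OF ne(1) ne(2)] algD2[OF ne(1) ne(2)] ratio_alg[OF d] ..
qed

lemma dil_C:
  assumes "z \<in> unit_disk"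
  shows "dilatation hC gC z = - (z^2)"
proof -
  have n: "norm z < 1" using assms by (simp add: unit_disk_def)
  note ne = sq_ne[OF n]
  have hC: "hC = (\<lambda>z. (1/4) * Ln ((1 + z) / (1 - z)) + (1/2) * (z / (1 - z^2)))"
    by (rule ext) (simp add: hC_def)
  have gC: "gC = (\<lambda>z. (1/4) * Ln ((1 + z) / (1 - z)) - (1/2) * (z / (1 - z^2)))"
    by (rule ext) (simp add: gC_def)
  have dh: "(hC has_field_derivative (1/4) * (2/(1-z^2)) + (1/2) * ((1+z^2)/(1-z^2)^2)) (at z)"
    unfolding hC by (intro DERIV_add DERIV_cmult dL[OF n] dR[OF n])
  have dg: "(gC has_field_derivative (1/4) * (2/(1-z^2)) - (1/2) * ((1+z^2)/(1-z^2)^2)) (at z)"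
    unfolding gC by (intro DERIV_diff DERIV_cmult dL[OF n] dR[OF n])
  have d: "(1 - z^2)^2 \<noteq> 0" using ne by simp
  show ?thesis
    unfolding dilatation_def DERIV_imp_deriv[OF dh] DERIV_imp_deriv[OF dg]
      algC1[OF ne(1)] algC2[OF ne(1)] ratio_alg[OF d] ..
qed



lemma inj_main:
  assumes t: "t \<in> {0..1::real}"
  shows "inj_on (f_mix t) unit_disk"
proof (rule inj_onI)
  fix z1 z2 assume z1: "z1 \<in> unit_disk" and z2: "z2 \<in> unit_disk" and eq: "f_mix t z1 = f_mix t z2"
  define u1 where "u1 = Ln ((1+z1)/(1-z1))"
  define u2 where "u2 = Ln ((1+z2)/(1-z2))"
  have n1: "norm z1 < 1" and n2: "norm z2 < 1" using z1 z2 by (auto simp: unit_disk_def)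
  have r1: "Re ((1+z1)/(1-z1)) > 0" by (rule disk_re_pos[OF n1])
  have r2: "Re ((1+z2)/(1-z2)) > 0" by (rule disk_re_pos[OF n2])
  have Y1: "\<bar>Im u1\<bar> < pi/2" unfolding u1_def by (rule Re_Ln_pos_lt_imp[OF r1])
  have Y2: "\<bar>Im u2\<bar> < pi/2" unfolding u2_def by (rule Re_Ln_pos_lt_imp[OF r2])
  have "Complex (AA t (Re u1) (Im u1) / 2) (BB t (Re u1) (Im u1) / 2)
      = Complex (AA t (Re u2) (Im u2) / 2) (BB t (Re u2) (Im u2) / 2)"
    using eq rep[OF z1, of t] rep[OF z2, of t] unfolding u1_def u2_def by simp
  then have "AA t (Re u1) (Im u1) = AA t (Re u2) (Im u2)" "BB t (Re u1) (Im u1) = BB t (Re u2) (Im u2)"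
    by auto
  then have "Re u1 = Re u2 \<and> Im u1 = Im u2" using t Y1 Y2 by (intro injAB) auto
  then have "u1 = u2" by (simp add: complex_eq_iff)
  then have "exp u1 = exp u2" by simp
  moreover have "(1+z1)/(1-z1) \<noteq> 0" "(1+z2)/(1-z2) \<noteq> 0" using r1 r2 by auto
  ultimately have w: "(1+z1)/(1-z1) = (1+z2)/(1-z2)" unfolding u1_def u2_def by simp
  have a1: "1 - z1 \<noteq> 0" "1 - z2 \<noteq> 0" using n1 n2 by auto
  then have "(1+z1)*(1-z2) = (1+z2)*(1-z1)" using w by (simp add: frac_eq_eq)
  then have "2*z1 = 2*z2" by (simp add: algebra_simps)
  then show "z1 = z2" by simp
qed

theorem mainTheorem5:
  shows "(\<forall>z\<in>unit_disk. dilatation hD gD z = - (z^2))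
       \<and> (\<forall>z\<in>unit_disk. dilatation hC gC z = - (z^2))
       \<and> (\<forall>t\<in>{0..1::real}. inj_on (f_mix t) unit_disk)"
  using dil_D dil_C inj_main by blast

end
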